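(* Assume $\varphi$ has a bounded density with respect to the spherical Lebesgue measure on $\mathbb{S}^{d-1}$. Then there exists a constant $C_\varphi$, depending only on $\varphi$, such that for every increasing function $f:[0,\infty)\to[0,\infty)$, \[ \int_{\mathsf{P}} f\big(\Phi(T(u_{0:d}))\big)\,d\varphi^{d+1}(u_{0:d})\le C_\varphi\int_1^\infty f(t)\,\frac{1}{t^2}\,dt . \]
   Context: Let $d\ge2$ and let $\varphi$ be an even Borel probability measure on $\mathbb{S}^{d-1}$ whose support is not contained in a great subsphere. For a convex body $K$, $\Phi(K)=\int_{\mathbb{S}^{d-1}}h(K,u)\,d\varphi(u)$ with $h(K,u)=\max_{x\in K}\langle x,u\rangle$. For $u\in\mathbb{S}^{d-1}$ put $H(u,1)^-=\{x\in\mathbb{R}^d:\langle x,u\rangle\le 1\}$. Write $u_{0:d}=(u_0,\dots,u_d)\in(\mathbb{S}^{d-1})^{d+1}$; $\mathsf{P}$ is the set of such tuples with $u_0,\dots,u_d$ not all contained in one closed half sphere, and $T(u_{0:d})=\bigcap_{i=0}^dH(u_i,1)^-$. *)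

theory Defs
  imports "HOL-Probability.Probability"
begin

text \<open>Spherical Lebesgue (surface area) measure on the unit sphere of 'a, realised on the
  Borel sets of 'a: sigma(A) = DIM('a) * vol({t x | 0 \<le> t \<le> 1, x \<in> A \<inter> S}),
  i.e. DIM('a) times the pushforward of Lebesgue measure on the unit ball under x \<mapsto> x/|x|.\<close>
definition sphere_lebesgue :: "'a::euclidean_space measure" where
  "sphere_lebesgue =
     density (distr (density lborel (indicator (ball 0 1))) borel (\<lambda>x. x /\<^sub>R norm x))
             (\<lambda>_. ennreal (real DIM('a)))"

definition measure_support :: "'a::metric_space measure \<Rightarrow> 'a set" where
  "measure_support M = {x. \<forall>e>0. emeasure M (ball x e) > 0}"

definition great_subsphere :: "'a::euclidean_space \<Rightarrow> 'a set" where
  "great_subsphere v = {x \<in> sphere 0 1. x \<bullet> v = 0}"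

definition supp_fun :: "'a::euclidean_space set \<Rightarrow> 'a \<Rightarrow> real" where
  "supp_fun K u = Sup ((\<lambda>x. x \<bullet> u) ` K)"

definition Phi_fun :: "'a::euclidean_space measure \<Rightarrow> 'a set \<Rightarrow> real" where
  "Phi_fun \<phi> K = (\<integral>u. supp_fun K u \<partial>\<phi>)"

definition halfspace1 :: "'a::euclidean_space \<Rightarrow> 'a set" where
  "halfspace1 u = {x. x \<bullet> u \<le> 1}"

definition T_poly :: "(nat \<Rightarrow> 'a::euclidean_space) \<Rightarrow> 'a set" where
  "T_poly u = (\<Inter>i\<in>{0..DIM('a)}. halfspace1 (u i))"

definition P_set :: "(nat \<Rightarrow> 'a::euclidean_space) set" where
  "P_set = {u \<in> PiE {0..DIM('a)} (\<lambda>_. sphere 0 1).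
              \<not> (\<exists>v\<in>sphere 0 1. \<forall>i\<in>{0..DIM('a)}. 0 \<le> u i \<bullet> v)}"

end

theory Submission
  imports Defs
begin

lemma slab_lborel:
  fixes n :: "'a::euclidean_space"
  assumes n1: "norm n = 1" and dpos: "\<delta> > 0"
  shows "emeasure lborel {y. y \<in> ball (0::'a) 1 \<and> \<bar>y \<bullet> n\<bar> \<le> \<delta>}
           \<le> ennreal (6 * \<delta>) * emeasure lborel (ball (0::'a) 2)"
proof -
  define S0 where "S0 = {y. y \<in> ball (0::'a) 1 \<and> \<bar>y \<bullet> n\<bar> \<le> \<delta>}"
  have S0m[measurable]: "S0 \<in> sets lborel" unfolding S0_def by measurable
  show ?thesis
  proof (cases "\<delta> > 1/6")
    case True
    have "emeasure lborel S0 \<le> emeasure lborel (ball (0::'a) 2)"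
      by (rule emeasure_mono) (auto simp: S0_def)
    also have "\<dots> \<le> ennreal (6 * \<delta>) * emeasure lborel (ball (0::'a) 2)"
    proof -
      have "1 \<le> ennreal (6 * \<delta>)" using True by (simp add: ennreal_1[symmetric] del: ennreal_1)
      then show ?thesis
        using mult_right_mono[of 1 "ennreal (6 * \<delta>)" "emeasure lborel (ball (0::'a) 2)"] by simp
    qed
    finally show ?thesis unfolding S0_def .
  next
    case False
    define N where "N = nat \<lfloor>1 / (3 * \<delta>)\<rfloor>"
    have N1: "1 \<le> 6 * \<delta> * real N"
    proof -
      have "1 / (3 * \<delta>) - 1 < real_of_int \<lfloor>1 / (3 * \<delta>)\<rfloor>" by linarith
      moreover have "1 / (3*\<delta>) \<ge> 2" using False dpos by (simp add: field_simps)
      ultimately have "real N \<ge> 1/(3*\<delta>) - 1" unfolding N_def by linarith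
      then have "6 * \<delta> * real N \<ge> 6 * \<delta> * (1/(3*\<delta>) - 1)" using dpos by simp
      also have "6 * \<delta> * (1/(3*\<delta>) - 1) = 2 - 6 * \<delta>" using dpos by (simp add: field_simps)
      finally show ?thesis using False by linarith
    qed
    have N2: "3 * \<delta> * real N \<le> 1"
    proof -
      have "0 \<le> 1 / (3 * \<delta>)" using dpos by simp
      then have "real N = real_of_int \<lfloor>1 / (3 * \<delta>)\<rfloor>" unfolding N_def by simp
      then have "real N \<le> 1 / (3 * \<delta>)" by linarith
      then show ?thesis using dpos by (simp add: field_simps)
    qed
    define c where "c k = (3 * real k * \<delta>) *\<^sub>R n" for k :: nat
    define T where "T k = {y. y - c k \<in> S0}" for k
    have Tpre: "(+) (- c k) -` S0 \<inter> space lborel = T k" for k by (auto simp: T_def)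
    have Tm: "T k \<in> sets lborel" for k
    proof -
      have "(+) (- c k) \<in> measurable lborel lborel" by simp
      from measurable_sets[OF this S0m] show ?thesis by (simp only: Tpre)
    qed
    have Teq: "emeasure lborel (T k) = emeasure lborel S0" for k
    proof -
      have "emeasure lborel S0 = emeasure (distr lborel borel ((+) (- c k))) S0"
        by (simp add: lborel_distr_plus)
      also have "\<dots> = emeasure lborel ((+) (- c k) -` S0 \<inter> space lborel)"
        by (rule emeasure_distr) (use S0m in auto)
      also note Tpre
      finally show ?thesis by simp
    qed
    have cn: "c k \<bullet> n = 3 * real k * \<delta>" for k
      using n1 by (simp add: c_def dot_square_norm power2_eq_square)
    have disj: "disjoint_family_on T {..<N}"
      unfolding disjoint_family_on_def
    proof (intro ballI impI)
      fix k l assume "k \<in> {..<N}" "l \<in> {..<N}" "k \<noteq> l"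
      show "T k \<inter> T l = {}"
      proof (rule ccontr)
        assume "T k \<inter> T l \<noteq> {}"
        then obtain y where "y \<in> T k" "y \<in> T l" by auto
        then have "\<bar>(y - c k) \<bullet> n\<bar> \<le> \<delta>" "\<bar>(y - c l) \<bullet> n\<bar> \<le> \<delta>" by (auto simp: T_def S0_def)
        then have "\<bar>y \<bullet> n - 3 * real k * \<delta>\<bar> \<le> \<delta>" "\<bar>y \<bullet> n - 3 * real l * \<delta>\<bar> \<le> \<delta>"
          by (auto simp: inner_diff_left cn)
        then have "\<bar>3 * real k * \<delta> - 3 * real l * \<delta>\<bar> \<le> 2 * \<delta>" by linarith
        moreover have "3 * real k * \<delta> - 3 * real l * \<delta> = (3 * \<delta>) * (real k - real l)"
          by (simp add: algebra_simps)
        moreover have "\<bar>(3 * \<delta>) * (real k - real l)\<bar> = 3 * \<delta> * \<bar>real k - real l\<bar>"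
          using dpos by (simp add: abs_mult)
        ultimately have "3 * \<delta> * \<bar>real k - real l\<bar> \<le> 2 * \<delta>" by simp
        moreover have "\<bar>real k - real l\<bar> \<ge> 1" using \<open>k \<noteq> l\<close> by linarith
        ultimately have "3 * \<delta> * 1 \<le> 2 * \<delta>"
          using mult_left_mono[of 1 "\<bar>real k - real l\<bar>" "3 * \<delta>"] dpos by linarith
        then show False using dpos by linarith
      qed
    qed
    have sub: "(\<Union>k\<in>{..<N}. T k) \<subseteq> ball 0 2"
    proof
      fix y assume "y \<in> (\<Union>k\<in>{..<N}. T k)"
      then obtain k where k: "k < N" "y - c k \<in> S0" by (auto simp: T_def)
      have "norm (c k) = 3 * real k * \<delta>" using n1 dpos by (simp add: c_def)
      also have "\<dots> \<le> 3 * real N * \<delta>" using k dpos by simp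
      finally have "norm (c k) \<le> 1" using N2 by (simp add: algebra_simps)
      moreover have "norm (y - c k) < 1" using k by (auto simp: S0_def)
      ultimately have "norm y < 2" using norm_triangle_ineq[of "y - c k" "c k"] by simp
      then show "y \<in> ball 0 2" by simp
    qed
    have "of_nat N * emeasure lborel S0 = (\<Sum>k\<in>{..<N}. emeasure lborel (T k))"
      by (simp add: Teq)
    also have "\<dots> = emeasure lborel (\<Union>k\<in>{..<N}. T k)"
      by (rule sum_emeasure) (use Tm disj in auto)
    also have "\<dots> \<le> emeasure lborel (ball (0::'a) 2)"
      by (rule emeasure_mono[OF sub]) simp
    finally have NS: "of_nat N * emeasure lborel S0 \<le> emeasure lborel (ball (0::'a) 2)" .
    have "emeasure lborel S0 = 1 * emeasure lborel S0" by simp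
    also have "\<dots> \<le> ennreal (6 * \<delta> * real N) * emeasure lborel S0"
      by (rule mult_right_mono) (use N1 in \<open>simp add: ennreal_1[symmetric] del: ennreal_1\<close>)+
    also have "\<dots> = ennreal (6 * \<delta>) * (of_nat N * emeasure lborel S0)"
      using dpos by (simp add: ennreal_mult ennreal_of_nat_eq_real_of_nat mult.assoc)
    also have "\<dots> \<le> ennreal (6 * \<delta>) * emeasure lborel (ball (0::'a) 2)"
      by (rule mult_left_mono[OF NS]) simp
    finally show ?thesis unfolding S0_def .
  qed
qed

lemma sphere_slab:
  fixes n :: "'a::euclidean_space"
  assumes n1: "norm n = 1" and dpos: "\<delta> > 0"
  shows "emeasure (sphere_lebesgue :: 'a measure) {y. \<bar>y \<bullet> n\<bar> < \<delta>}
          \<le> ennreal (real DIM('a)) * (ennreal (6 * \<delta>) * emeasure lborel (ball (0::'a) 2))"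
proof -
  define A where "A = {y::'a. \<bar>y \<bullet> n\<bar> < \<delta>}"
  have Am[measurable]: "A \<in> sets borel" unfolding A_def by measurable
  have nm: "(\<lambda>x::'a. x /\<^sub>R norm x) \<in> borel_measurable borel" by measurable
  have "emeasure (sphere_lebesgue :: 'a measure) A = ennreal (real DIM('a)) *
      emeasure (distr (density lborel (indicator (ball (0::'a) 1))) borel (\<lambda>x. x /\<^sub>R norm x)) A"
    unfolding sphere_lebesgue_def by (rule emeasure_density_const) simp
  also have "emeasure (distr (density lborel (indicator (ball (0::'a) 1))) borel (\<lambda>x. x /\<^sub>R norm x)) A
      = emeasure (density lborel (indicator (ball (0::'a) 1))) ((\<lambda>x. x /\<^sub>R norm x) -` A \<inter> space (density lborel (indicator (ball (0::'a) 1))))"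
    by (rule emeasure_distr) (use nm in simp_all)
  also have "\<dots> = emeasure lborel (ball 0 1 \<inter> ((\<lambda>x. x /\<^sub>R norm x) -` A))"
  proof -
    have "(\<lambda>x::'a. x /\<^sub>R norm x) -` A \<inter> space borel \<in> sets borel"
      by (rule measurable_sets[OF nm Am])
    then have "(\<lambda>x::'a. x /\<^sub>R norm x) -` A \<in> sets borel" by simp
    then show ?thesis by (subst emeasure_restricted) auto
  qed
  also have "\<dots> \<le> emeasure lborel {y. y \<in> ball (0::'a) 1 \<and> \<bar>y \<bullet> n\<bar> \<le> \<delta>}"
  proof (rule emeasure_mono)
    show "{y. y \<in> ball (0::'a) 1 \<and> \<bar>y \<bullet> n\<bar> \<le> \<delta>} \<in> sets lborel" by measurable
    show "ball 0 1 \<inter> (\<lambda>x. x /\<^sub>R norm x) -` A \<subseteq> {y. y \<in> ball 0 1 \<and> \<bar>y \<bullet> n\<bar> \<le> \<delta>}"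
    proof
      fix y :: 'a assume y: "y \<in> ball 0 1 \<inter> (\<lambda>x. x /\<^sub>R norm x) -` A"
      show "y \<in> {y. y \<in> ball 0 1 \<and> \<bar>y \<bullet> n\<bar> \<le> \<delta>}"
      proof (cases "y = 0")
        case True then show ?thesis using dpos by simp
      next
        case False
        have ny: "norm y < 1" using y by simp
        have "\<bar>(y /\<^sub>R norm y) \<bullet> n\<bar> < \<delta>" using y by (simp add: A_def)
        moreover have "y \<bullet> n = norm y * ((y /\<^sub>R norm y) \<bullet> n)"
        proof -
          have "(y /\<^sub>R norm y) \<bullet> n = inverse (norm y) * (y \<bullet> n)" by (simp add: inner_scaleR_left)
          then show ?thesis using False by simp
        qed
        ultimately have "\<bar>y \<bullet> n\<bar> = norm y * \<bar>(y /\<^sub>R norm y) \<bullet> n\<bar>"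
          by (metis abs_mult abs_norm_cancel)
        also have "\<dots> \<le> 1 * \<delta>"
          by (rule mult_mono) (use ny \<open>\<bar>(y /\<^sub>R norm y) \<bullet> n\<bar> < \<delta>\<close> dpos in auto)
        finally have "\<bar>y \<bullet> n\<bar> \<le> 1 * \<delta>" .
        then show ?thesis using y by simp
      qed
    qed
  qed
  also have "\<dots> \<le> ennreal (6 * \<delta>) * emeasure lborel (ball (0::'a) 2)"
    by (rule slab_lborel[OF n1 dpos])
  finally show ?thesis unfolding A_def by (simp add: mult_left_mono)
qed

lemma sets_sphere_lebesgue[simp]: "sets (sphere_lebesgue :: 'a::euclidean_space measure) = sets borel"
  unfolding sphere_lebesgue_def by simp

lemma space_sphere_lebesgue[simp]: "space (sphere_lebesgue :: 'a::euclidean_space measure) = UNIV"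
  unfolding sphere_lebesgue_def by simp

lemma norm_sgn_le1: "norm (x /\<^sub>R norm x) \<le> (1::real)"
  for x :: "'a::real_normed_vector"
  by (cases "x = 0") simp_all

lemma AE_sphere_lebesgue_norm: "AE x in (sphere_lebesgue :: 'a::euclidean_space measure). norm x \<le> 1"
proof -
  have nm: "(\<lambda>x::'a. x /\<^sub>R norm x) \<in> borel_measurable (density lborel (indicator (ball (0::'a) 1)))"
    by measurable
  have "AE x in distr (density lborel (indicator (ball (0::'a) 1))) borel (\<lambda>x. x /\<^sub>R norm x). norm x \<le> 1"
    apply (subst AE_distr_iff[OF nm])
     apply measurable
    apply (rule AE_I2)
    apply (rule norm_sgn_le1)
    done
  then show ?thesis unfolding sphere_lebesgue_def
    by (subst AE_density) (auto elim: eventually_mono)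
qed

lemma ball2_finite: "emeasure lborel (ball (0::'a::euclidean_space) 2) = ennreal (enn2real (emeasure lborel (ball (0::'a) 2)))"
  using emeasure_bounded_finite[of "ball (0::'a) 2"] by simp

lemma phi_slab:
  fixes n :: "'a::euclidean_space" and \<phi> :: "'a measure"
  assumes gm: "g \<in> borel_measurable borel" and gb: "\<forall>x. 0 \<le> g x \<and> g x \<le> B"
    and phi: "\<phi> = density sphere_lebesgue (\<lambda>x. ennreal (g x))"
    and n1: "norm n = 1" and dpos: "\<delta> > 0"
  shows "emeasure \<phi> {y. \<bar>y \<bullet> n\<bar> < \<delta>}
          \<le> ennreal (B * real DIM('a) * 6 * enn2real (emeasure lborel (ball (0::'a) 2)) * \<delta>)"
proof -
  define A where "A = {y::'a. \<bar>y \<bullet> n\<bar> < \<delta>}"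
  define V where "V = enn2real (emeasure lborel (ball (0::'a) 2))"
  have Am[measurable]: "A \<in> sets borel" unfolding A_def by measurable
  have B0: "0 \<le> B" using gb by (meson order_trans)
  have V0: "0 \<le> V" unfolding V_def by simp
  have "emeasure \<phi> A = (\<integral>\<^sup>+ x. ennreal (g x) * indicator A x \<partial>sphere_lebesgue)"
  proof -
    have "(\<lambda>x. ennreal (g x)) \<in> borel_measurable sphere_lebesgue"
      by (subst measurable_cong_sets[OF sets_sphere_lebesgue refl]) (use gm in measurable)
    then show ?thesis unfolding phi by (rule emeasure_density) simp
  qed
  also have "\<dots> \<le> (\<integral>\<^sup>+ x. ennreal B * indicator A x \<partial>sphere_lebesgue)"
    by (rule nn_integral_mono) (use gb in \<open>auto simp: indicator_def intro: ennreal_leI\<close>)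
  also have "\<dots> = ennreal B * emeasure sphere_lebesgue A"
    by (rule nn_integral_cmult_indicator) simp
  also have "\<dots> \<le> ennreal B * (ennreal (real DIM('a)) * (ennreal (6 * \<delta>) * emeasure lborel (ball (0::'a) 2)))"
    by (rule mult_left_mono) (use sphere_slab[OF n1 dpos] in \<open>simp_all add: A_def\<close>)
  also have "\<dots> = ennreal (B * real DIM('a) * 6 * V * \<delta>)"
    using B0 V0 dpos by (subst ball2_finite) (simp add: ennreal_mult[symmetric] V_def mult_ac)
  finally show ?thesis unfolding A_def V_def .
qed

definition Dset :: "'a::euclidean_space measure \<Rightarrow> nat \<Rightarrow> nat \<Rightarrow> real \<Rightarrow> (nat \<Rightarrow> 'a) set" where
  "Dset \<phi> i j \<delta> = (\<Union>a\<in>PiE ({0..DIM('a)} - {i,j}) (\<lambda>_. \<rat>).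
     {u \<in> space (PiM {0..DIM('a)} (\<lambda>_. \<phi>)).
        norm (u j - (\<Sum>k\<in>{0..DIM('a)} - {i,j}. a k *\<^sub>R u k)) < \<delta>})"

lemma Dset_sets:
  fixes \<phi> :: "'a::euclidean_space measure"
  assumes sph: "sets \<phi> = sets borel" and ij: "j \<in> {0..DIM('a)}"
  shows "Dset \<phi> i j \<delta> \<in> sets (PiM {0..DIM('a)} (\<lambda>_. \<phi>))"
  unfolding Dset_def
proof (rule sets.countable_UN')
  show "countable (PiE ({0..DIM('a)} - {i,j}) (\<lambda>_. \<rat>))"
    by (rule countable_PiE) (auto simp: countable_rat)
  show "(\<lambda>a. {u \<in> space (PiM {0..DIM('a)} (\<lambda>_. \<phi>)).
        norm (u j - (\<Sum>k\<in>{0..DIM('a)} - {i,j}. a k *\<^sub>R u k)) < \<delta>}) `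
        PiE ({0..DIM('a)} - {i,j}) (\<lambda>_. \<rat>) \<subseteq> sets (PiM {0..DIM('a)} (\<lambda>_. \<phi>))"
  proof (clarsimp)
    fix a
    have comp: "(\<lambda>u. u k) \<in> borel_measurable (PiM {0..DIM('a)} (\<lambda>_. \<phi>))" if "k \<in> {0..DIM('a)}" for k
    proof -
      have "(\<lambda>u. u k) \<in> measurable (PiM {0..DIM('a)} (\<lambda>_. \<phi>)) \<phi>"
        by (rule measurable_component_singleton) (use that in simp)
      then show ?thesis using sph by (simp add: measurable_cong_sets[OF refl sph])
    qed
    have "(\<lambda>u. norm (u j - (\<Sum>k\<in>{0..DIM('a)} - {i,j}. a k *\<^sub>R u k))) \<in> borel_measurable (PiM {0..DIM('a)} (\<lambda>_. \<phi>))"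
    proof -
      have [measurable]: "(\<lambda>u. (\<Sum>k\<in>{0..DIM('a)} - {i,j}. a k *\<^sub>R u k)) \<in> borel_measurable (PiM {0..DIM('a)} (\<lambda>_. \<phi>))"
      proof (rule borel_measurable_sum)
        fix k assume "k \<in> {0..DIM('a)} - {i,j}"
        then have "(\<lambda>u. u k) \<in> borel_measurable (PiM {0..DIM('a)} (\<lambda>_. \<phi>))" using comp by auto
        then show "(\<lambda>u. a k *\<^sub>R u k) \<in> borel_measurable (PiM {0..DIM('a)} (\<lambda>_. \<phi>))"
          by (intro borel_measurable_scaleR) auto
      qed
      moreover have [measurable]: "(\<lambda>u. u j) \<in> borel_measurable (PiM {0..DIM('a)} (\<lambda>_. \<phi>))" using comp ij by auto
      ultimately show ?thesis by measurable
    qed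
    then show "{u \<in> space (PiM {0..DIM('a)} (\<lambda>_. \<phi>)).
        norm (u j - (\<Sum>k\<in>{0..DIM('a)} - {i,j}. a k *\<^sub>R u k)) < \<delta>} \<in> sets (PiM {0..DIM('a)} (\<lambda>_. \<phi>))"
      by measurable
  qed
qed

lemma unit_orth_exists:
  fixes x :: "nat \<Rightarrow> 'a::euclidean_space"
  assumes "finite K" "card K < DIM('a)"
  obtains n where "norm n = 1" "\<And>k. k \<in> K \<Longrightarrow> n \<bullet> x k = 0"
    "\<And>a. n \<bullet> (\<Sum>k\<in>K. a k *\<^sub>R x k) = 0"
proof -
  have "dim (x ` K) \<le> card (x ` K)"
    by (rule dim_le_card) (use assms in \<open>auto intro: span_base\<close>)
  also have "\<dots> \<le> card K" using assms by (simp add: card_image_le)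
  finally have "dim (x ` K) < DIM('a)" using assms by simp
  then obtain n0 where n0: "n0 \<noteq> 0" "\<And>y. y \<in> span (x ` K) \<Longrightarrow> orthogonal n0 y"
    using orthogonal_to_subspace_exists by metis
  define n where "n = n0 /\<^sub>R norm n0"
  have o: "n \<bullet> y = 0" if "y \<in> span (x ` K)" for y
    using n0(2)[OF that] by (simp add: n_def orthogonal_def)
  show ?thesis
  proof
    show "norm n = 1" using n0 by (simp add: n_def)
    show "n \<bullet> x k = 0" if "k \<in> K" for k using that by (intro o span_base) auto
    show "n \<bullet> (\<Sum>k\<in>K. a k *\<^sub>R x k) = 0" for a
      by (intro o span_sum span_scale span_base) auto
  qed
qed

lemma Dset_bound:
  fixes \<phi> :: "'a::euclidean_space measure"
  assumes prob: "prob_space \<phi>" and sph: "sets \<phi> = sets borel"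
    and slab: "\<And>n. norm n = 1 \<Longrightarrow> emeasure \<phi> {y. \<bar>y \<bullet> n\<bar> < \<delta>} \<le> ennreal c"
    and ij: "i \<in> {0..DIM('a)}" "j \<in> {0..DIM('a)}" "i \<noteq> j"
  shows "emeasure (PiM {0..DIM('a)} (\<lambda>_. \<phi>)) (Dset \<phi> i j \<delta>) \<le> ennreal c"
proof -
  define I where "I = {0..DIM('a)}"
  define J where "J = I - {j}"
  define K where "K = I - {i,j}"
  define D where "D = Dset \<phi> i j \<delta>"
  have IJ: "I = insert j J" using ij by (auto simp: I_def J_def)
  have Dm: "D \<in> sets (PiM I (\<lambda>_. \<phi>))" unfolding D_def I_def by (rule Dset_sets[OF sph ij(2)])
  have spphi: "space \<phi> = UNIV" using sets_eq_imp_space_eq[OF sph] by simp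
  interpret P: product_prob_space "\<lambda>_::nat. \<phi>" J
    by (simp add: product_prob_space_def product_prob_space_axioms_def product_sigma_finite_def
        prob prob_space_imp_sigma_finite)
  have finJ: "finite J" "j \<notin> J" by (auto simp: J_def I_def)
  have cardK: "card K < DIM('a)"
  proof -
    have "card K = card I - card {i,j}" unfolding K_def
      by (rule card_Diff_subset) (use ij in \<open>auto simp: I_def\<close>)
    then show ?thesis using ij by (simp add: I_def)
  qed
  have finK: "finite K" by (simp add: K_def I_def)
  have "emeasure (PiM I (\<lambda>_. \<phi>)) D = (\<integral>\<^sup>+ u. indicator D u \<partial>PiM I (\<lambda>_. \<phi>))"
    using Dm by simp
  also have "\<dots> = (\<integral>\<^sup>+ x. (\<integral>\<^sup>+ y. indicator D (x(j := y)) \<partial>\<phi>) \<partial>PiM J (\<lambda>_. \<phi>))"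
    unfolding IJ by (rule P.product_nn_integral_insert[OF finJ]) (use Dm IJ in simp)
  also have "\<dots> \<le> (\<integral>\<^sup>+ x. ennreal c \<partial>PiM J (\<lambda>_. \<phi>))"
  proof (rule nn_integral_mono)
    fix x assume x: "x \<in> space (PiM J (\<lambda>_. \<phi>))"
    obtain n where n1: "norm n = 1" and nsum: "\<And>a. n \<bullet> (\<Sum>k\<in>K. a k *\<^sub>R x k) = 0"
      using unit_orth_exists[OF finK cardK, of x] by metis
    have "(\<integral>\<^sup>+ y. indicator D (x(j := y)) \<partial>\<phi>) \<le> (\<integral>\<^sup>+ y. indicator {y. \<bar>y \<bullet> n\<bar> < \<delta>} y \<partial>\<phi>)"
    proof (rule nn_integral_mono)
      fix y
      show "indicator D (x(j := y)) \<le> (indicator {y. \<bar>y \<bullet> n\<bar> < \<delta>} y :: ennreal)"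
      proof (cases "x(j := y) \<in> D")
        case True
        then obtain a where a: "norm ((x(j := y)) j - (\<Sum>k\<in>K. a k *\<^sub>R (x(j := y)) k)) < \<delta>"
          unfolding D_def Dset_def K_def I_def by blast
        have "(\<Sum>k\<in>K. a k *\<^sub>R (x(j := y)) k) = (\<Sum>k\<in>K. a k *\<^sub>R x k)"
          by (rule sum.cong) (auto simp: K_def)
        then have a2: "norm (y - (\<Sum>k\<in>K. a k *\<^sub>R x k)) < \<delta>" using a by simp
        have "\<bar>y \<bullet> n\<bar> = \<bar>(y - (\<Sum>k\<in>K. a k *\<^sub>R x k)) \<bullet> n\<bar>"
          using nsum[of a] by (simp add: inner_diff_left inner_diff_right inner_commute)
        also have "\<dots> \<le> norm (y - (\<Sum>k\<in>K. a k *\<^sub>R x k)) * norm n"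
          by (rule Cauchy_Schwarz_ineq2)
        finally have "\<bar>y \<bullet> n\<bar> < \<delta>" using a2 n1 by simp
        then show ?thesis using True by simp
      qed simp
    qed
    also have "\<dots> = emeasure \<phi> {y. \<bar>y \<bullet> n\<bar> < \<delta>}"
      by (rule nn_integral_indicator) (simp add: sph)
    also have "\<dots> \<le> ennreal c" by (rule slab[OF n1])
    finally show "(\<integral>\<^sup>+ y. indicator D (x(j := y)) \<partial>\<phi>) \<le> ennreal c" .
  qed
  also have "\<dots> = ennreal c" by (simp add: P.emeasure_space_1)
  finally show ?thesis unfolding D_def I_def .
qed

lemma T_closed: "closed (T_poly u)"
  unfolding T_poly_def halfspace1_def
proof (intro closed_INT ballI)
  fix i
  have "{x. x \<bullet> u i \<le> 1} = {x. u i \<bullet> x \<le> 1}" by (simp add: inner_commute)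
  then show "closed {x. x \<bullet> u i \<le> 1}" using closed_halfspace_le by metis
qed

lemma T_zero: "(0::'a::euclidean_space) \<in> T_poly u"
  unfolding T_poly_def halfspace1_def by simp

lemma T_bounded:
  fixes u :: "nat \<Rightarrow> 'a::euclidean_space"
  assumes uP: "u \<in> P_set"
  shows "bounded (T_poly u)"
proof -
  define I where "I = {0..DIM('a)}"
  define G where "G v = (\<Sum>i\<in>I. max 0 (u i \<bullet> v))" for v
  have cG: "continuous_on (sphere 0 1) G"
    unfolding G_def by (intro continuous_intros)
  have sne: "sphere (0::'a) 1 \<noteq> {}" by simp
  obtain v0 where v0: "v0 \<in> sphere 0 1" "\<And>y. y \<in> sphere 0 1 \<Longrightarrow> G v0 \<le> G y"
    using continuous_attains_inf[OF compact_sphere sne cG] by blast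
  have Gpos: "G v > 0" if "v \<in> sphere 0 1" for v
  proof -
    have "- v \<in> sphere 0 1" using that by simp
    then obtain i where i: "i \<in> I" "\<not> 0 \<le> u i \<bullet> (- v)"
      using uP unfolding P_set_def I_def by blast
    then have "0 < max 0 (u i \<bullet> v)" by simp
    also have "\<dots> \<le> G v" unfolding G_def
      by (rule member_le_sum) (use i in \<open>auto simp: I_def\<close>)
    finally show ?thesis .
  qed
  define m where "m = G v0"
  have m0: "m > 0" using Gpos v0 by (simp add: m_def)
  have "norm x \<le> real (card I) / m" if x: "x \<in> T_poly u" for x
  proof (cases "x = 0")
    case True then show ?thesis using m0 by simp
  next
    case False
    define v where "v = x /\<^sub>R norm x"
    have vs: "v \<in> sphere 0 1" using False by (simp add: v_def)
    have "G v \<le> (\<Sum>i\<in>I. 1 / norm x)" unfolding G_def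
    proof (rule sum_mono)
      fix i assume "i \<in> I"
      then have "x \<bullet> u i \<le> 1" using x by (auto simp: T_poly_def halfspace1_def I_def)
      then have "u i \<bullet> v \<le> 1 / norm x" using False
        by (simp add: v_def inner_commute divide_simps)
      then show "max 0 (u i \<bullet> v) \<le> 1 / norm x" by simp
    qed
    also have "\<dots> = real (card I) / norm x" by simp
    finally have "m \<le> real (card I) / norm x" using v0(2)[OF vs] by (simp add: m_def)
    then have "m * norm x \<le> real (card I)" using False by (simp add: divide_simps)
    then show ?thesis using m0 by (simp add: divide_simps mult.commute)
  qed
  then show ?thesis unfolding bounded_iff by blast
qed

lemma T_compact: "u \<in> P_set \<Longrightarrow> compact (T_poly u)"
  using T_bounded T_closed compact_eq_bounded_closed by blast

lemma geo:
  fixes u :: "nat \<Rightarrow> 'a::euclidean_space" and \<phi> :: "'a measure"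
  assumes uP: "u \<in> P_set" and sph: "space \<phi> = UNIV" and x: "x \<in> T_poly u"
    and xt: "norm x > t" and t0: "t > 0"
  shows "\<exists>i\<in>{0..DIM('a)}. \<exists>j\<in>{0..DIM('a)}. i \<noteq> j \<and> u \<in> Dset \<phi> i j (real DIM('a) / t)"
proof -
  define I where "I = {0..DIM('a)}"
  define T where "T = T_poly u"
  have Tc: "compact T" using T_compact[OF uP] by (simp add: T_def)
  have Tne: "T \<noteq> {}" using x by (auto simp: T_def)
  obtain z where zT: "z \<in> T" and zmax: "\<And>y. y \<in> T \<Longrightarrow> norm y \<le> norm z"
    using distance_attains_sup[OF Tc Tne, of 0] by (auto simp: dist_0_norm)
  have zt: "norm z > t" using zmax[of x] x xt by (simp add: T_def)
  have inT: "y \<in> T \<longleftrightarrow> (\<forall>k\<in>I. u k \<bullet> y \<le> 1)" for y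
    by (auto simp: T_def T_poly_def halfspace1_def I_def inner_commute)
  have zle: "\<And>k. k \<in> I \<Longrightarrow> u k \<bullet> z \<le> 1" using zT inT by blast
  have unit: "\<And>k. k \<in> I \<Longrightarrow> norm (u k) = 1"
    using uP by (auto simp: P_set_def I_def PiE_def Pi_def)
  define A where "A = {k\<in>I. u k \<bullet> z = 1}"
  have spanA: "span (u ` A) = UNIV"
  proof (rule ccontr)
    assume nf: "span (u ` A) \<noteq> UNIV"
    have "dim (u ` A) \<le> DIM('a)"
      using dim_subset_UNIV[of "u ` A"] by simp
    moreover have "dim (u ` A) \<noteq> DIM('a)" using nf dim_eq_full by auto
    ultimately have "dim (u ` A) < DIM('a)" by simp
    then obtain w where w0: "w \<noteq> 0" and wo: "\<And>y. y \<in> span (u ` A) \<Longrightarrow> orthogonal w y"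
      using orthogonal_to_subspace_exists by metis
    have wA: "u k \<bullet> w = 0" if "k \<in> A" for k
      using wo[of "u k"] that by (auto simp: orthogonal_def inner_commute intro: span_base)
    have ev: "\<forall>\<^sub>F s in at_right 0. \<forall>k\<in>I. u k \<bullet> z + s * \<bar>u k \<bullet> w\<bar> \<le> 1"
    proof (rule eventually_ball_finite)
      show "finite I" by (simp add: I_def)
      show "\<forall>k\<in>I. \<forall>\<^sub>F s in at_right 0. u k \<bullet> z + s * \<bar>u k \<bullet> w\<bar> \<le> 1"
      proof
        fix k assume k: "k \<in> I"
        show "\<forall>\<^sub>F s in at_right 0. u k \<bullet> z + s * \<bar>u k \<bullet> w\<bar> \<le> 1"
        proof (cases "k \<in> A")
          case True then show ?thesis using wA[OF True] by (simp add: A_def)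
        next
          case False
          then have lt: "u k \<bullet> z < 1" using zle[OF k] k by (auto simp: A_def)
          have "((\<lambda>s::real. u k \<bullet> z + s * \<bar>u k \<bullet> w\<bar>) \<longlongrightarrow> u k \<bullet> z + 0 * \<bar>u k \<bullet> w\<bar>) (at_right 0)"
            by (intro tendsto_intros)
          then have "\<forall>\<^sub>F s in at_right 0. u k \<bullet> z + s * \<bar>u k \<bullet> w\<bar> < 1"
            using lt by (intro order_tendstoD(2)) auto
          then show ?thesis by (rule eventually_mono) simp
        qed
      qed
    qed
    then obtain b where b0: "b > 0" and bb: "\<And>s. s > 0 \<Longrightarrow> s < b \<Longrightarrow> \<forall>k\<in>I. u k \<bullet> z + s * \<bar>u k \<bullet> w\<bar> \<le> 1"
      by (auto simp: eventually_at_right_field)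
    define s where "s = b / 2"
    have s0: "s > 0" and sI: "\<forall>k\<in>I. u k \<bullet> z + s * \<bar>u k \<bullet> w\<bar> \<le> 1"
      using b0 bb[of s] by (auto simp: s_def)
    define c where "c = (if z \<bullet> w \<ge> 0 then s else - s)"
    have cabs: "\<bar>c\<bar> = s" using s0 by (simp add: c_def)
    have czw: "c * (z \<bullet> w) \<ge> 0" using s0 by (auto simp: c_def mult_nonneg_nonneg intro: mult_pos_neg[THEN less_imp_le])
    have "z + c *\<^sub>R w \<in> T"
    proof -
      have "u k \<bullet> (z + c *\<^sub>R w) \<le> 1" if k: "k \<in> I" for k
      proof -
        have "c * (u k \<bullet> w) \<le> \<bar>c\<bar> * \<bar>u k \<bullet> w\<bar>" by (metis abs_ge_self abs_mult)
        then have "c * (u k \<bullet> w) \<le> s * \<bar>u k \<bullet> w\<bar>" using cabs by simp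
        moreover have "u k \<bullet> z + s * \<bar>u k \<bullet> w\<bar> \<le> 1" using sI k by blast
        ultimately show ?thesis by (simp add: inner_add_right)
      qed
      then show ?thesis using inT by blast
    qed
    then have le: "norm (z + c *\<^sub>R w) \<le> norm z" by (rule zmax)
    have "(norm (z + c *\<^sub>R w))\<^sup>2 = (norm z)\<^sup>2 + 2 * (c * (z \<bullet> w)) + c\<^sup>2 * (norm w)\<^sup>2"
      unfolding power2_norm_eq_inner by (simp add: inner_add_left inner_add_right inner_commute power2_eq_square algebra_simps)
    moreover have "c\<^sup>2 * (norm w)\<^sup>2 > 0" using w0 cabs s0 by auto
    ultimately have "(norm (z + c *\<^sub>R w))\<^sup>2 > (norm z)\<^sup>2" using czw by linarith
    then have "norm (z + c *\<^sub>R w) > norm z"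
      using power_mono[of "norm (z + c *\<^sub>R w)" "norm z" 2] by (meson norm_ge_zero not_le)
    then show False using le by simp
  qed
  obtain B where B: "B \<subseteq> u ` A" "independent B" "u ` A \<subseteq> span B"
    by (rule maximal_independent_subset)
  have spanB: "span B = UNIV"
  proof -
    have "span (u ` A) \<subseteq> span B" using B(3) by (metis span_mono span_span)
    then show ?thesis using spanA by auto
  qed
  have finB: "finite B" using B(2) by (rule finiteI_independent)
  have cardB: "card B = DIM('a)"
    using dim_span_eq_card_independent[OF B(2)] spanB by simp
  obtain I' where I': "I' \<subseteq> A" "inj_on u I'" "B = u ` I'"
    using B(1) subset_image_inj by metis
  have I'I: "I' \<subseteq> I" using I'(1) by (auto simp: A_def)
  have finI: "finite I" by (simp add: I_def)
  have cardI': "card I' = DIM('a)" using cardB I' card_image by metis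
  have cardI: "card I = DIM('a) + 1" by (simp add: I_def)
  obtain i where i: "i \<in> I" "i \<notin> I'"
  proof -
    have "\<not> I \<subseteq> I'"
    proof
      assume "I \<subseteq> I'"
      then have "card I \<le> card I'" using finI I'I by (metis card_mono finite_subset)
      then show False using cardI cardI' by simp
    qed
    then show ?thesis using that by blast
  qed
  have I'eq: "I' = I - {i}"
  proof (rule card_subset_eq)
    show "finite (I - {i})" using finI by simp
    show "I' \<subseteq> I - {i}" using I'I i by auto
    show "card I' = card (I - {i})" using cardI' cardI i by simp
  qed
  have finI': "finite I'" using finI I'I finite_subset by blast
  have z0: "norm z > 0" using zt t0 by linarith
  define p where "p = (1 / (norm z)\<^sup>2) *\<^sub>R z"
  have "p \<in> span B" using spanB by simp
  then obtain cc where "p = (\<Sum>v\<in>B. cc v *\<^sub>R v)"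
    using span_finite[OF finB] by auto
  also have "\<dots> = (\<Sum>k\<in>I'. cc (u k) *\<^sub>R u k)"
    unfolding I'(3) by (subst sum.reindex[OF I'(2)]) simp
  finally have pdef: "p = (\<Sum>k\<in>I'. cc (u k) *\<^sub>R u k)" .
  define a where "a k = cc (u k)" for k
  have sa: "(\<Sum>k\<in>I'. a k) = 1"
  proof -
    have "p \<bullet> z = 1" using z0 by (simp add: p_def dot_square_norm)
    moreover have "p \<bullet> z = (\<Sum>k\<in>I'. a k * (u k \<bullet> z))"
      unfolding pdef a_def by (simp add: inner_sum_left)
    moreover have "(\<Sum>k\<in>I'. a k * (u k \<bullet> z)) = (\<Sum>k\<in>I'. a k)"
      by (rule sum.cong) (use I'(1) in \<open>auto simp: A_def\<close>)
    ultimately show ?thesis by simp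
  qed
  have I'ne: "I' \<noteq> {}" using cardI' by auto
  obtain j where j: "j \<in> I'" "\<bar>a j\<bar> \<ge> 1 / real DIM('a)"
  proof -
    have "\<exists>j\<in>I'. \<bar>a j\<bar> \<ge> 1 / real DIM('a)"
    proof (rule ccontr)
      assume "\<not> ?thesis"
      then have "\<And>k. k \<in> I' \<Longrightarrow> \<bar>a k\<bar> < 1 / real DIM('a)" by auto
      then have "(\<Sum>k\<in>I'. \<bar>a k\<bar>) < of_nat (card I') * (1 / real DIM('a))"
        by (rule sum_bounded_above_strict) (use cardI' in simp_all)
      also have "\<dots> = 1" using cardI' by simp
      finally have "(\<Sum>k\<in>I'. \<bar>a k\<bar>) < 1" .
      moreover have "\<bar>\<Sum>k\<in>I'. a k\<bar> \<le> (\<Sum>k\<in>I'. \<bar>a k\<bar>)" by (rule sum_abs)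
      ultimately show False using sa by simp
    qed
    then show ?thesis using that by blast
  qed
  have aj0: "a j \<noteq> 0" using j(2) by auto
  define K where "K = I - {i, j}"
  have KI': "K = I' - {j}" using I'eq by (auto simp: K_def)
  have ij: "i \<noteq> j" using i j by auto
  have jI: "j \<in> I" using j I'I by auto
  have finK: "finite K" using finI by (simp add: K_def)
  define bb where "bb k = - (a k / a j)" for k
  have eq: "u j - (\<Sum>k\<in>K. bb k *\<^sub>R u k) = (1 / a j) *\<^sub>R p"
  proof -
    have "p = a j *\<^sub>R u j + (\<Sum>k\<in>K. a k *\<^sub>R u k)"
      unfolding pdef a_def KI' using finI' j(1) by (simp add: sum.remove)
    then have "(1 / a j) *\<^sub>R p = u j + (1 / a j) *\<^sub>R (\<Sum>k\<in>K. a k *\<^sub>R u k)"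
      using aj0 by (simp add: scaleR_add_right)
    also have "(1 / a j) *\<^sub>R (\<Sum>k\<in>K. a k *\<^sub>R u k) = - (\<Sum>k\<in>K. bb k *\<^sub>R u k)"
      by (simp add: scaleR_sum_right bb_def sum_negf[symmetric] divide_inverse mult.commute)
    finally show ?thesis by simp
  qed
  define r where "r = norm (u j - (\<Sum>k\<in>K. bb k *\<^sub>R u k))"
  have rlt: "r < real DIM('a) / t"
  proof -
    have "r = norm p / \<bar>a j\<bar>" by (simp add: r_def eq divide_inverse mult.commute)
    also have "norm p = 1 / norm z" using z0 by (simp add: p_def power2_eq_square)
    also have "1 / norm z / \<bar>a j\<bar> \<le> 1 / norm z * real DIM('a)"
    proof -
      have "1 / \<bar>a j\<bar> \<le> real DIM('a)" using j(2) aj0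
        by (simp add: divide_simps mult.commute)
      then show ?thesis using z0 by (simp add: divide_inverse mult_left_mono)
    qed
    also have "1 / norm z * real DIM('a) < real DIM('a) / t"
      using zt t0 by (simp add: divide_simps mult.commute mult_strict_left_mono)
    finally show ?thesis .
  qed
  define eps where "eps = (real DIM('a) / t - r) / (real (card K) + 1)"
  have eps0: "eps > 0" using rlt by (simp add: eps_def)
  have "\<forall>k. \<exists>q\<in>\<rat>. bb k - eps < q \<and> q < bb k + eps"
    using eps0 by (intro allI Rats_dense_in_real) simp
  then obtain q where q: "\<And>k. q k \<in> \<rat>" "\<And>k. \<bar>q k - bb k\<bar> < eps"
    by (metis abs_diff_less_iff)
  define a' where "a' = restrict q K"
  have a'Q: "a' \<in> PiE K (\<lambda>_. \<rat>)" using q(1) by (simp add: a'_def)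
  have "norm (u j - (\<Sum>k\<in>K. a' k *\<^sub>R u k))
      = norm ((u j - (\<Sum>k\<in>K. bb k *\<^sub>R u k)) + (\<Sum>k\<in>K. (bb k - q k) *\<^sub>R u k))"
  proof -
    have "(\<Sum>k\<in>K. a' k *\<^sub>R u k) = (\<Sum>k\<in>K. q k *\<^sub>R u k)" by (simp add: a'_def)
    then show ?thesis by (simp add: scaleR_diff_left sum_subtractf algebra_simps)
  qed
  also have "\<dots> \<le> r + norm (\<Sum>k\<in>K. (bb k - q k) *\<^sub>R u k)"
    unfolding r_def by (rule norm_triangle_ineq)
  also have "norm (\<Sum>k\<in>K. (bb k - q k) *\<^sub>R u k) \<le> (\<Sum>k\<in>K. eps)"
  proof -
    have "norm (\<Sum>k\<in>K. (bb k - q k) *\<^sub>R u k) \<le> (\<Sum>k\<in>K. norm ((bb k - q k) *\<^sub>R u k))"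
      by (rule norm_sum)
    also have "\<dots> \<le> (\<Sum>k\<in>K. eps)"
    proof (rule sum_mono)
      fix k assume "k \<in> K"
      then have "norm (u k) = 1" using unit by (auto simp: K_def)
      then show "norm ((bb k - q k) *\<^sub>R u k) \<le> eps" using q(2)[of k] by (simp add: abs_minus_commute)
    qed
    finally show ?thesis .
  qed
  also have "(\<Sum>k\<in>K. eps) = real (card K) * eps" by simp
  also have "real (card K) * eps < real DIM('a) / t - r"
  proof -
    have "real (card K) * eps < (real (card K) + 1) * eps" using eps0 by simp
    also have "\<dots> = real DIM('a) / t - r" by (simp add: eps_def)
    finally show ?thesis .
  qed
  finally have fin: "norm (u j - (\<Sum>k\<in>K. a' k *\<^sub>R u k)) < real DIM('a) / t" by simp
  have uspace: "u \<in> space (PiM {0..DIM('a)} (\<lambda>_. \<phi>))"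
    using uP by (auto simp: P_set_def space_PiM sph PiE_def Pi_def)
  have "u \<in> Dset \<phi> i j (real DIM('a) / t)"
    unfolding Dset_def using a'Q fin uspace by (auto simp: K_def I_def)
  then show ?thesis using i(1) jI ij unfolding I_def by blast
qed

lemma supp_fun_bounds:
  fixes u :: "nat \<Rightarrow> 'a::euclidean_space"
  assumes uP: "u \<in> P_set"
  shows "0 \<le> supp_fun (T_poly u) w"
    and "(\<forall>x\<in>T_poly u. norm x \<le> t) \<Longrightarrow> supp_fun (T_poly u) w \<le> t * norm w"
proof -
  obtain R where R: "\<And>x. x \<in> T_poly u \<Longrightarrow> norm x \<le> R"
    using T_bounded[OF uP] unfolding bounded_iff by blast
  have bdd: "bdd_above ((\<lambda>x. x \<bullet> w) ` T_poly u)"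
  proof (rule bdd_aboveI2)
    fix x assume "x \<in> T_poly u"
    have "x \<bullet> w \<le> norm x * norm w" by (rule norm_cauchy_schwarz)
    also have "\<dots> \<le> R * norm w" using R[OF \<open>x \<in> T_poly u\<close>] by (simp add: mult_right_mono)
    finally show "x \<bullet> w \<le> R * norm w" .
  qed
  show "0 \<le> supp_fun (T_poly u) w"
    unfolding supp_fun_def using cSup_upper[OF _ bdd, of 0] T_zero[of u] by force
  assume t: "\<forall>x\<in>T_poly u. norm x \<le> t"
  show "supp_fun (T_poly u) w \<le> t * norm w"
    unfolding supp_fun_def
  proof (rule cSup_least)
    show "(\<lambda>x. x \<bullet> w) ` T_poly u \<noteq> {}" using T_zero[of u] by blast
    fix y assume "y \<in> (\<lambda>x. x \<bullet> w) ` T_poly u"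
    then obtain x where x: "x \<in> T_poly u" "y = x \<bullet> w" by blast
    have "x \<bullet> w \<le> norm x * norm w" by (rule norm_cauchy_schwarz)
    also have "\<dots> \<le> t * norm w" using t x by (simp add: mult_right_mono)
    finally show "y \<le> t * norm w" using x by simp
  qed
qed

lemma Phi_bounds:
  fixes u :: "nat \<Rightarrow> 'a::euclidean_space" and \<phi> :: "'a measure"
  assumes prob: "prob_space \<phi>" and AE1: "AE w in \<phi>. norm w \<le> 1" and uP: "u \<in> P_set"
  shows "0 \<le> Phi_fun \<phi> (T_poly u)"
    and "0 \<le> t \<Longrightarrow> Phi_fun \<phi> (T_poly u) > t \<Longrightarrow> \<exists>x\<in>T_poly u. norm x > t"
proof -
  interpret prob_space \<phi> by (rule prob)
  show "0 \<le> Phi_fun \<phi> (T_poly u)"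
    unfolding Phi_fun_def by (rule integral_nonneg_AE) (simp add: supp_fun_bounds(1)[OF uP])
  assume t0: "0 \<le> t" and gt: "Phi_fun \<phi> (T_poly u) > t"
  show "\<exists>x\<in>T_poly u. norm x > t"
  proof (rule ccontr)
    assume "\<not> ?thesis"
    then have all: "\<forall>x\<in>T_poly u. norm x \<le> t" by (auto simp: not_less)
    have "Phi_fun \<phi> (T_poly u) \<le> t"
    proof (cases "integrable \<phi> (supp_fun (T_poly u))")
      case True
      have "(\<integral>w. supp_fun (T_poly u) w \<partial>\<phi>) \<le> (\<integral>w. t \<partial>\<phi>)"
      proof (rule integral_mono_AE[OF True])
        show "integrable \<phi> (\<lambda>w. t)" by simp
        show "AE w in \<phi>. supp_fun (T_poly u) w \<le> t"
          using AE1
        proof (rule eventually_mono)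
          fix w :: 'a assume "norm w \<le> 1"
          then have "t * norm w \<le> t * 1" using t0 by (intro mult_left_mono) auto
          then show "supp_fun (T_poly u) w \<le> t" using supp_fun_bounds(2)[OF uP all, of w] by simp
        qed
      qed
      also have "\<dots> = t" by (simp add: prob_space)
      finally show ?thesis unfolding Phi_fun_def .
    next
      case False
      then show ?thesis using t0 by (simp add: Phi_fun_def not_integrable_integral_eq)
    qed
    then show False using gt by simp
  qed
qed

lemma dyadic_unique:
  fixes t :: real
  assumes "2 ^ (k+1) \<le> t" "t < 2 ^ (k+2)" "2 ^ (n+1) \<le> t" "t < 2 ^ (n+2)"
  shows "k = n"
proof -
  have "(2::real) ^ (k+1) < 2 ^ (n+2)" using assms by linarith
  then have "k + 1 < n + 2" by (rule power_less_imp_less_exp[rotated]) simp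
  moreover have "(2::real) ^ (n+1) < 2 ^ (k+2)" using assms by linarith
  then have "n + 1 < k + 2" by (rule power_less_imp_less_exp[rotated]) simp
  ultimately show ?thesis by simp
qed

lemma rhs_lower:
  fixes f :: "real \<Rightarrow> real"
  assumes mono: "mono_on {0..} f" and nn: "\<forall>t\<ge>0. 0 \<le> f t"
  shows "(\<Sum>k. ennreal (f (2^(k+1)) / 2^(k+3))) \<le> (\<integral>\<^sup>+ t \<in> {1..}. ennreal (f t / t\<^sup>2) \<partial>lborel)"
proof -
  define c where "c k = f (2^(k+1)) / 2^(2*k+4)" for k :: nat
  define Ik where "Ik k = {(2::real)^(k+1)..<2^(k+2)}" for k :: nat
  have c0: "0 \<le> c k" for k using nn by (simp add: c_def)
  have "(\<Sum>k. ennreal (f (2^(k+1)) / 2^(k+3))) = (\<Sum>k. \<integral>\<^sup>+t. ennreal (c k) * indicator (Ik k) t \<partial>lborel)"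
  proof (rule suminf_cong)
    fix k :: nat
    have "(\<integral>\<^sup>+t. ennreal (c k) * indicator (Ik k) t \<partial>lborel) = ennreal (c k) * emeasure lborel (Ik k)"
      by (rule nn_integral_cmult_indicator) (simp add: Ik_def)
    also have "emeasure lborel (Ik k) = ennreal (2^(k+2) - 2^(k+1))"
      by (simp add: Ik_def)
    also have "ennreal (c k) * ennreal (2^(k+2) - 2^(k+1)) = ennreal (c k * (2^(k+2) - 2^(k+1)))"
      using c0 by (simp add: ennreal_mult)
    also have "c k * (2^(k+2) - 2^(k+1)) = f (2^(k+1)) / 2^(k+3)"
      by (simp add: c_def power_add field_simps mult_2_right[symmetric] power_mult power2_eq_square)
    finally show "ennreal (f (2^(k+1)) / 2^(k+3)) = (\<integral>\<^sup>+t. ennreal (c k) * indicator (Ik k) t \<partial>lborel)" by simp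
  qed
  also have "\<dots> = (\<integral>\<^sup>+t. (\<Sum>k. ennreal (c k) * indicator (Ik k) t) \<partial>lborel)"
    by (rule nn_integral_suminf[symmetric]) (simp add: Ik_def)
  also have "\<dots> \<le> (\<integral>\<^sup>+ t \<in> {1..}. ennreal (f t / t\<^sup>2) \<partial>lborel)"
  proof (rule nn_integral_mono)
    fix t :: real
    show "(\<Sum>k. ennreal (c k) * indicator (Ik k) t) \<le> ennreal (f t / t\<^sup>2) * indicator {1..} t"
    proof (cases "\<exists>k. t \<in> Ik k")
      case True
      then obtain k where k: "t \<in> Ik k" by blast
      have "(\<Sum>n. ennreal (c n) * indicator (Ik n) t) = (\<Sum>n\<in>{k}. ennreal (c n) * indicator (Ik n) t)"
      proof (rule suminf_finite)
        fix n assume "n \<notin> {k}"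
        then have "t \<notin> Ik n" using k dyadic_unique[of k t n] by (auto simp: Ik_def)
        then show "ennreal (c n) * indicator (Ik n) t = 0" by simp
      qed simp
      also have "\<dots> = ennreal (c k)" using k by simp
      also have "\<dots> \<le> ennreal (f t / t\<^sup>2)"
      proof (rule ennreal_leI)
        have k1: "2^(k+1) \<le> t" "t < 2^(k+2)" using k by (auto simp: Ik_def)
        have t0: "0 < t" using k1(1) by (smt (verit) zero_less_power)
        have "f (2^(k+1)) \<le> f t" using mono k1 by (intro mono_onD[OF mono]) auto
        moreover have "t\<^sup>2 \<le> 2^(2*k+4)"
        proof -
          have "t\<^sup>2 \<le> (2^(k+2))\<^sup>2" using k1 t0 by (intro power_mono) auto
          also have "((2::real)^(k+2))^2 = 2^((k+2)*2)" by (rule power_mult[symmetric])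
          also have "(k+2)*2 = 2*k+4" by simp
          finally show ?thesis .
        qed
        ultimately show "c k \<le> f t / t\<^sup>2" unfolding c_def
          using nn t0 by (intro frac_le) auto
      qed
      also have "\<dots> = ennreal (f t / t\<^sup>2) * indicator {1..} t"
      proof -
        have "2^(k+1) \<le> t" using k by (auto simp: Ik_def)
        moreover have "(1::real) \<le> 2^(k+1)" using one_le_power[of "2::real" "k+1"] by simp
        ultimately show ?thesis by simp
      qed
      finally show ?thesis .
    next
      case False
      then show ?thesis by simp
    qed
  qed
  finally show ?thesis .
qed

lemma dyadic_exists:
  fixes P :: real
  assumes "P > 2"
  obtains k :: nat where "k \<ge> 1" "2^k < P" "P \<le> 2^(k+1)"
proof -
  obtain n :: nat where "P < 2^n" using real_arch_pow[of 2 P] by auto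
  then have ex: "\<exists>n::nat. P \<le> 2^n" by (auto intro: less_imp_le)
  define n0 where "n0 = (LEAST n::nat. P \<le> 2^n)"
  have n0: "P \<le> 2^n0" unfolding n0_def by (rule LeastI_ex[OF ex])
  have n0ge: "n0 \<ge> 2"
  proof (rule ccontr)
    assume "\<not> n0 \<ge> 2"
    then have "n0 = 0 \<or> n0 = 1" by auto
    then show False using n0 assms by auto
  qed
  define k where "k = n0 - 1"
  have k1: "k + 1 = n0" using n0ge by (simp add: k_def)
  have "\<not> P \<le> 2^k" unfolding k_def n0_def
    by (rule not_less_Least) (use n0ge in \<open>simp add: n0_def[symmetric]\<close>)
  then show ?thesis using that[of k] n0 k1 n0ge by (auto simp: k_def)
qed

theorem lemma4p2:
  fixes \<phi> :: "'a::euclidean_space measure"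
  assumes dim: "DIM('a) \<ge> 2"
    and prob: "prob_space \<phi>"
    and even: "distr \<phi> borel uminus = \<phi>"
    and nondeg: "\<forall>v. v \<noteq> 0 \<longrightarrow> \<not> measure_support \<phi> \<subseteq> great_subsphere v"
    and dens: "\<exists>g B. g \<in> borel_measurable borel \<and> (\<forall>x. 0 \<le> g x \<and> g x \<le> B)
                 \<and> \<phi> = density sphere_lebesgue (\<lambda>x. ennreal (g x))"
  shows "\<exists>C::real. \<forall>f::real \<Rightarrow> real.
           mono_on {0..} f \<longrightarrow> (\<forall>t\<ge>0. 0 \<le> f t) \<longrightarrow>
           (\<integral>\<^sup>+ u \<in> P_set. ennreal (f (Phi_fun \<phi> (T_poly u))) \<partial>(PiM {0..DIM('a)} (\<lambda>_. \<phi>)))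
             \<le> ennreal C * (\<integral>\<^sup>+ t \<in> {1..}. ennreal (f t / t\<^sup>2) \<partial>lborel)"
proof -
  obtain g B where gm: "g \<in> borel_measurable borel" and gb: "\<forall>x. 0 \<le> g x \<and> g x \<le> B"
    and phi: "\<phi> = density sphere_lebesgue (\<lambda>x. ennreal (g x))"
    using dens by blast
  define I where "I = {0..DIM('a)}"
  define M where "M = PiM I (\<lambda>_. \<phi>)"
  define V where "V = enn2real (emeasure lborel (ball (0::'a) 2))"
  define C0 where "C0 = B * real DIM('a) * 6 * V"
  define PR where "PR = {p \<in> I \<times> I. fst p \<noteq> snd p}"
  define C1 where "C1 = 1 + real (card PR) * C0 * real DIM('a)"
  have sph: "sets \<phi> = sets borel" unfolding phi by simp
  have spphi: "space \<phi> = UNIV" using sets_eq_imp_space_eq[OF sph] by simp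
  have gms: "(\<lambda>x. ennreal (g x)) \<in> borel_measurable sphere_lebesgue"
    by (subst measurable_cong_sets[OF sets_sphere_lebesgue refl]) (use gm in measurable)
  have AE1: "AE w in \<phi>. norm w \<le> 1"
    unfolding phi by (subst AE_density[OF gms]) (use AE_sphere_lebesgue_norm in \<open>auto elim: eventually_mono\<close>)
  have B0: "0 \<le> B" using gb by (meson order_trans)
  have V0: "0 \<le> V" unfolding V_def by simp
  have C00: "0 \<le> C0" using B0 V0 by (simp add: C0_def)
  have C11: "1 \<le> C1" using C00 by (simp add: C1_def)
  have slab: "emeasure \<phi> {y. \<bar>y \<bullet> n\<bar> < \<delta>} \<le> ennreal (C0 * \<delta>)" if "\<delta> > 0" "norm n = 1" for \<delta> and n :: 'a
    using phi_slab[OF gm gb phi that(2) that(1)] by (simp add: C0_def V_def mult_ac)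
  interpret PM: product_prob_space "\<lambda>_::nat. \<phi>" I
    by (simp add: product_prob_space_def product_prob_space_axioms_def product_sigma_finite_def
        prob prob_space_imp_sigma_finite)
  have Dmeas: "emeasure M (Dset \<phi> i j \<delta>) \<le> ennreal (C0 * \<delta>)"
    if "(i, j) \<in> PR" "\<delta> > 0" for i j \<delta>
    unfolding M_def I_def
    by (rule Dset_bound[OF prob sph]) (use that slab in \<open>auto simp: PR_def I_def\<close>)
  define E where "E k = (if k = 0 then space M else (\<Union>p\<in>PR. Dset \<phi> (fst p) (snd p) (real DIM('a) / 2^k)))" for k :: nat
  have finPR: "finite PR" unfolding PR_def I_def
    by (rule finite_subset[of _ "{0..DIM('a)} \<times> {0..DIM('a)}"]) auto
  have Dsets: "Dset \<phi> (fst p) (snd p) \<delta> \<in> sets M" if "p \<in> PR" for p \<delta>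
    unfolding M_def I_def by (rule Dset_sets[OF sph]) (use that in \<open>auto simp: PR_def I_def\<close>)
  have Em: "E k \<in> sets M" for k
    unfolding E_def using Dsets finPR by auto
  have Ebound: "emeasure M (E k) \<le> ennreal (C1 / 2^k)" for k
  proof (cases "k = 0")
    case True
    have "emeasure M (space M) = 1" unfolding M_def by (rule PM.emeasure_space_1)
    then show ?thesis using True C11 by (simp add: E_def)
  next
    case False
    have "emeasure M (E k) \<le> (\<Sum>p\<in>PR. emeasure M (Dset \<phi> (fst p) (snd p) (real DIM('a) / 2^k)))"
      unfolding E_def using False by (simp add: emeasure_subadditive_finite finPR Dsets image_subset_iff)
    also have "\<dots> \<le> (\<Sum>p\<in>PR. ennreal (C0 * (real DIM('a) / 2^k)))"
      by (rule sum_mono) (rule Dmeas, auto)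
    also have "\<dots> = ennreal (real (card PR) * (C0 * (real DIM('a) / 2^k)))"
    proof -
      have X0: "0 \<le> C0 * (real DIM('a) / 2^k)" using C00 by simp
      have "(\<Sum>p\<in>PR. ennreal (C0 * (real DIM('a) / 2^k))) = of_nat (card PR) * ennreal (C0 * (real DIM('a) / 2^k))"
        by simp
      also have "\<dots> = ennreal (real (card PR)) * ennreal (C0 * (real DIM('a) / 2^k))"
        by (simp add: ennreal_of_nat_eq_real_of_nat)
      also have "\<dots> = ennreal (real (card PR) * (C0 * (real DIM('a) / 2^k)))"
        by (rule ennreal_mult[symmetric]) (use X0 in auto)
      finally show ?thesis .
    qed
    also have "\<dots> \<le> ennreal (C1 / 2^k)"
      by (rule ennreal_leI) (simp add: C1_def field_simps)
    finally show ?thesis .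
  qed
  show ?thesis
  proof (intro exI allI impI)
    fix f :: "real \<Rightarrow> real"
    assume mono: "mono_on {0..} f" and nn: "\<forall>t\<ge>0. 0 \<le> f t"
    define Ph where "Ph u = Phi_fun \<phi> (T_poly u)" for u :: "nat \<Rightarrow> 'a"
    have pw: "ennreal (f (Ph u)) * indicator P_set u \<le> (\<Sum>k. ennreal (f (2^(k+1))) * indicator (E k) u)"
      if uM: "u \<in> space M" for u
    proof (cases "u \<in> P_set")
      case False then show ?thesis by simp
    next
      case True
      have P0: "0 \<le> Ph u" unfolding Ph_def by (rule Phi_bounds(1)[OF prob AE1 True])
      obtain k where fk: "f (Ph u) \<le> f (2^(k+1))" and uE: "u \<in> E k"
      proof (cases "Ph u \<le> 2")
        case True
        then have "f (Ph u) \<le> f (2^(0+1))" using P0 by (intro mono_onD[OF mono]) auto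
        moreover have "u \<in> E 0" using uM by (simp add: E_def)
        ultimately show ?thesis using that by blast
      next
        case False
        then obtain k :: nat where k: "k \<ge> 1" "2^k < Ph u" "Ph u \<le> 2^(k+1)"
          using dyadic_exists[of "Ph u"] by auto
        obtain x where x: "x \<in> T_poly u" "norm x > 2^k"
          using Phi_bounds(2)[OF prob AE1 \<open>u \<in> P_set\<close>, of "2^k"] k(2) by (auto simp: Ph_def)
        obtain i j where ij: "i \<in> {0..DIM('a)}" "j \<in> {0..DIM('a)}" "i \<noteq> j"
          and uD: "u \<in> Dset \<phi> i j (real DIM('a) / 2^k)"
          using geo[OF \<open>u \<in> P_set\<close> spphi x(1) x(2)] by auto
        have "(i, j) \<in> PR" using ij by (simp add: PR_def I_def)
        then have "u \<in> E k" using k(1) uD unfolding E_def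
          by (auto intro!: bexI[of _ "(i, j)"])
        moreover have "f (Ph u) \<le> f (2^(k+1))" using P0 k by (intro mono_onD[OF mono]) auto
        ultimately show ?thesis using that by blast
      qed
      have "ennreal (f (Ph u)) * indicator P_set u = ennreal (f (Ph u))" using True by simp
      also have "\<dots> \<le> ennreal (f (2^(k+1))) * indicator (E k) u" using uE fk by (simp add: ennreal_leI)
      also have "\<dots> = (\<Sum>n\<in>{k}. ennreal (f (2^(n+1))) * indicator (E n) u)"
        by (simp only: sum.insert finite.emptyI empty_iff not_False_eq_True sum.empty add.right_neutral)
      also have "\<dots> \<le> (\<Sum>n. ennreal (f (2^(n+1))) * indicator (E n) u)"
        by (rule sum_le_suminf) (auto intro: summableI)
      finally show ?thesis .
    qed
    have "(\<integral>\<^sup>+ u \<in> P_set. ennreal (f (Phi_fun \<phi> (T_poly u))) \<partial>M)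
        \<le> (\<integral>\<^sup>+ u. (\<Sum>k. ennreal (f (2^(k+1))) * indicator (E k) u) \<partial>M)"
      by (rule nn_integral_mono) (use pw in \<open>simp add: Ph_def\<close>)
    also have "\<dots> = (\<Sum>k. \<integral>\<^sup>+ u. ennreal (f (2^(k+1))) * indicator (E k) u \<partial>M)"
      by (rule nn_integral_suminf) (use Em in simp)
    also have "\<dots> = (\<Sum>k. ennreal (f (2^(k+1))) * emeasure M (E k))"
      by (rule suminf_cong) (rule nn_integral_cmult_indicator[OF Em])
    also have "\<dots> \<le> (\<Sum>k. ennreal (8 * C1) * ennreal (f (2^(k+1)) / 2^(k+3)))"
    proof (rule suminf_le)
      fix k :: nat
      have fk0: "0 \<le> f (2^(k+1))" using nn by simp
      have "ennreal (f (2^(k+1))) * emeasure M (E k) \<le> ennreal (f (2^(k+1))) * ennreal (C1 / 2^k)"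
        by (rule mult_left_mono[OF Ebound]) simp
      also have "\<dots> = ennreal (8 * C1) * ennreal (f (2^(k+1)) / 2^(k+3))"
        using fk0 C11 by (simp add: ennreal_mult[symmetric] field_simps power_add)
      finally show "ennreal (f (2^(k+1))) * emeasure M (E k) \<le> ennreal (8 * C1) * ennreal (f (2^(k+1)) / 2^(k+3))" .
    qed (auto intro: summableI)
    also have "\<dots> = ennreal (8 * C1) * (\<Sum>k. ennreal (f (2^(k+1)) / 2^(k+3)))"
      by (rule ennreal_suminf_cmult)
    also have "\<dots> \<le> ennreal (8 * C1) * (\<integral>\<^sup>+ t \<in> {1..}. ennreal (f t / t\<^sup>2) \<partial>lborel)"
      by (rule mult_left_mono[OF rhs_lower[OF mono nn]]) simp
    finally show "(\<integral>\<^sup>+ u \<in> P_set. ennreal (f (Phi_fun \<phi> (T_poly u))) \<partial>(PiM {0..DIM('a)} (\<lambda>_. \<phi>)))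
             \<le> ennreal (8 * C1) * (\<integral>\<^sup>+ t \<in> {1..}. ennreal (f t / t\<^sup>2) \<partial>lborel)"
      unfolding M_def I_def .
  qed
qed

end
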